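(* Let $P$ be a directed complete poset. Then the map $\xi^\sigma_{\Sigma P}:\Sigma P\to \Sigma\,\mathsf{K}(\Sigma P)$, $x\mapsto\uparrow x$, is continuous.
   Context: A dcpo is a poset in which every directed subset has a supremum. For a poset $Q$, the Scott topology $\sigma(Q)$ consists of upper sets $U$ such that every directed $D$ whose supremum exists and lies in $U$ meets $U$; $\Sigma Q=(Q,\sigma(Q))$. For a $T_0$ space $Y$ (here $Y=\Sigma P$, whose specialization order is the order of $P$), $\mathsf{K}(Y)$ is the set of nonempty compact saturated (= upper in the specialization order) subsets, ordered by reverse inclusion; a family in $\mathsf{K}(Y)$ has a supremum iff its intersection lies in $\mathsf{K}(Y)$, and then the supremum is the intersection. $\Sigma\,\mathsf{K}(Y)$ is $\mathsf{K}(Y)$ with its Scott topology. *)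

theory Defs
  imports "HOL-Analysis.Analysis"
begin

definition directed_in :: "('a \<Rightarrow> 'a \<Rightarrow> bool) \<Rightarrow> 'a set \<Rightarrow> bool" where
  "directed_in le D \<longleftrightarrow> D \<noteq> {} \<and> (\<forall>x\<in>D. \<forall>y\<in>D. \<exists>z\<in>D. le x z \<and> le y z)"

definition is_sup_in :: "'a set \<Rightarrow> ('a \<Rightarrow> 'a \<Rightarrow> bool) \<Rightarrow> 'a set \<Rightarrow> 'a \<Rightarrow> bool" where
  "is_sup_in X le D s \<longleftrightarrow> s \<in> X \<and> (\<forall>d\<in>D. le d s) \<and> (\<forall>u\<in>X. (\<forall>d\<in>D. le d u) \<longrightarrow> le s u)"

definition upper_in :: "'a set \<Rightarrow> ('a \<Rightarrow> 'a \<Rightarrow> bool) \<Rightarrow> 'a set \<Rightarrow> bool" where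
  "upper_in X le U \<longleftrightarrow> U \<subseteq> X \<and> (\<forall>x\<in>U. \<forall>y\<in>X. le x y \<longrightarrow> y \<in> U)"

definition dcpo_on :: "'a set \<Rightarrow> ('a \<Rightarrow> 'a \<Rightarrow> bool) \<Rightarrow> bool" where
  "dcpo_on X le \<longleftrightarrow> (\<forall>D. D \<subseteq> X \<and> directed_in le D \<longrightarrow> (\<exists>s. is_sup_in X le D s))"

definition scott_open :: "'a set \<Rightarrow> ('a \<Rightarrow> 'a \<Rightarrow> bool) \<Rightarrow> 'a set \<Rightarrow> bool" where
  "scott_open X le U \<longleftrightarrow> upper_in X le U \<and>
     (\<forall>D s. D \<subseteq> X \<and> directed_in le D \<and> is_sup_in X le D s \<and> s \<in> U \<longrightarrow> D \<inter> U \<noteq> {})"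

definition scott_topology :: "'a set \<Rightarrow> ('a \<Rightarrow> 'a \<Rightarrow> bool) \<Rightarrow> 'a topology" where
  "scott_topology X le = topology (scott_open X le)"

text \<open>K(Sigma P): nonempty compact saturated (= upper) subsets of the Scott space of P,
  where P is the whole type 'a with its order.\<close>
definition K_Sigma :: "'a::order set set" where
  "K_Sigma = {K. K \<noteq> {} \<and> compactin (scott_topology UNIV (\<le>)) K \<and> upper_in UNIV (\<le>) K}"

end

theory Submission
  imports Defs
begin

lemma so_upper: "scott_open X le U \<Longrightarrow> x \<in> U \<Longrightarrow> y \<in> X \<Longrightarrow> le x y \<Longrightarrow> y \<in> U"
  unfolding scott_open_def upper_in_def by blast

lemma so_sub: "scott_open X le U \<Longrightarrow> U \<subseteq> X"
  unfolding scott_open_def upper_in_def by blast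

lemma so_dir: "scott_open X le U \<Longrightarrow> D \<subseteq> X \<Longrightarrow> directed_in le D \<Longrightarrow> is_sup_in X le D s
   \<Longrightarrow> s \<in> U \<Longrightarrow> \<exists>d\<in>D. d \<in> U"
  unfolding scott_open_def by blast

lemma so_intro:
  assumes "U \<subseteq> X" "\<And>x y. x \<in> U \<Longrightarrow> y \<in> X \<Longrightarrow> le x y \<Longrightarrow> y \<in> U"
    "\<And>D s. D \<subseteq> X \<Longrightarrow> directed_in le D \<Longrightarrow> is_sup_in X le D s \<Longrightarrow> s \<in> U \<Longrightarrow> \<exists>d\<in>D. d \<in> U"
  shows "scott_open X le U"
  unfolding scott_open_def upper_in_def
proof (intro conjI allI impI ballI)
  show "U \<subseteq> X" by (rule assms(1))
next
  fix x y assume "x \<in> U" "y \<in> X" "le x y" then show "y \<in> U" by (rule assms(2))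
next
  fix D s assume H: "D \<subseteq> X \<and> directed_in le D \<and> is_sup_in X le D s \<and> s \<in> U"
  then have "\<exists>d\<in>D. d \<in> U" using assms(3)[of D s] by blast
  then show "D \<inter> U \<noteq> {}" by blast
qed

lemma dir_ub: "directed_in le D \<Longrightarrow> a \<in> D \<Longrightarrow> b \<in> D \<Longrightarrow> \<exists>c\<in>D. le a c \<and> le b c"
  unfolding directed_in_def by blast

lemma scott_istopology: "istopology (scott_open X le)"
  unfolding istopology_def
proof (intro conjI allI impI ballI)
  fix S T assume S: "scott_open X le S" and T: "scott_open X le T"
  show "scott_open X le (S \<inter> T)"
  proof (rule so_intro)
    show "S \<inter> T \<subseteq> X" using so_sub[OF S] by auto
    fix x y assume "x \<in> S \<inter> T" "y \<in> X" "le x y"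
    then show "y \<in> S \<inter> T" using so_upper[OF S, of x y] so_upper[OF T, of x y] by simp
  next
    fix D s assume H: "D \<subseteq> X" "directed_in le D" "is_sup_in X le D s" "s \<in> S \<inter> T"
    obtain d1 where d1: "d1 \<in> D" "d1 \<in> S" using so_dir[OF S H(1-3)] H(4) by blast
    obtain d2 where d2: "d2 \<in> D" "d2 \<in> T" using so_dir[OF T H(1-3)] H(4) by blast
    obtain d3 where d3: "d3 \<in> D" "le d1 d3" "le d2 d3" using dir_ub[OF H(2) d1(1) d2(1)] by blast
    have "d3 \<in> X" using d3 H(1) by blast
    then have "d3 \<in> S" "d3 \<in> T" using so_upper[OF S d1(2) _ d3(2)] so_upper[OF T d2(2) _ d3(3)] by auto
    then show "\<exists>d\<in>D. d \<in> S \<inter> T" using d3 by blast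
  qed
next
  fix K assume K: "\<forall>S\<in>K. scott_open X le S"
  show "scott_open X le (\<Union>K)"
  proof (rule so_intro)
    show "\<Union>K \<subseteq> X" using K so_sub by (meson Union_least)
    fix x y assume "x \<in> \<Union>K" "y \<in> X" "le x y"
    then obtain S where "S \<in> K" "x \<in> S" by blast
    then have "y \<in> S" using so_upper[of X le S x y] K \<open>y \<in> X\<close> \<open>le x y\<close> by simp
    then show "y \<in> \<Union>K" using \<open>S \<in> K\<close> by blast
  next
    fix D s assume H: "D \<subseteq> X" "directed_in le D" "is_sup_in X le D s" "s \<in> \<Union>K"
    then obtain S where S: "S \<in> K" "s \<in> S" by blast
    then have "\<exists>d\<in>D. d \<in> S" using so_dir[OF _ H(1-3), of S] K by simp
    then show "\<exists>d\<in>D. d \<in> \<Union>K" using S by blast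
  qed
qed

lemma openin_scott: "openin (scott_topology X le) U \<longleftrightarrow> scott_open X le U"
  unfolding scott_topology_def by (simp add: topology_inverse'[OF scott_istopology])

lemma topspace_scott: "topspace (scott_topology X le) = X"
proof -
  have "scott_open X le X" by (rule so_intro) (auto simp: directed_in_def)
  then have "openin (scott_topology X le) X" by (simp add: openin_scott)
  moreover have "\<And>U. openin (scott_topology X le) U \<Longrightarrow> U \<subseteq> X" by (simp add: openin_scott so_sub)
  ultimately show ?thesis unfolding topspace_def by blast
qed

theorem mainTheorem7:
  assumes "dcpo_on (UNIV :: 'a::order set) (\<le>)"
  shows "continuous_map (scott_topology (UNIV :: 'a set) (\<le>))
           (scott_topology K_Sigma (\<lambda>A B. B \<subseteq> A))
           (\<lambda>x. {y. x \<le> y})"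
proof -
  have inK: "{y. x \<le> y} \<in> K_Sigma" for x :: 'a
  proof -
    have "compactin (scott_topology UNIV (\<le>)) {y. x \<le> y}"
      unfolding compactin_def topspace_scott
    proof (intro conjI allI impI)
      fix U assume U: "(\<forall>B\<in>U. openin (scott_topology UNIV (\<le>)) B) \<and> {y. x \<le> y} \<subseteq> \<Union>U"
      then obtain B where B: "B \<in> U" "x \<in> B" by blast
      then have So: "scott_open UNIV (\<le>) B" using U openin_scott by blast
      have "{y. x \<le> y} \<subseteq> B" using so_upper[OF So B(2)] by blast
      then show "\<exists>F. finite F \<and> F \<subseteq> U \<and> {y. x \<le> y} \<subseteq> \<Union>F"
        using B by (intro exI[of _ "{B}"]) auto
    qed auto
    moreover have "upper_in UNIV (\<le>) {y. x \<le> y}"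
      unfolding upper_in_def by (auto intro: order_trans)
    ultimately show ?thesis unfolding K_Sigma_def by blast
  qed
  show ?thesis
    unfolding continuous_map_def topspace_scott
  proof (intro conjI allI impI)
    show "(\<lambda>x. {y. x \<le> y}) \<in> (UNIV::'a set) \<rightarrow> K_Sigma" using inK by blast
    fix U :: "'a set set" assume "openin (scott_topology K_Sigma (\<lambda>A B. B \<subseteq> A)) U"
    then have U: "scott_open K_Sigma (\<lambda>A B. B \<subseteq> A) U" by (simp add: openin_scott)
    show "openin (scott_topology UNIV (\<le>)) {x \<in> UNIV. {y. x \<le> y} \<in> U}"
      unfolding openin_scott
    proof (rule so_intro)
      show "{x \<in> UNIV. {y. x \<le> y} \<in> U} \<subseteq> UNIV" by blast
      fix x y :: 'a assume x: "x \<in> {x \<in> UNIV. {y. x \<le> y} \<in> U}" and "x \<le> y"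
      then have "{z. y \<le> z} \<subseteq> {z. x \<le> z}" by auto
      moreover have "{y. x \<le> y} \<in> U" using x by blast
      ultimately have "{z. y \<le> z} \<in> U" using so_upper[OF U _ inK[of y]] by blast
      then show "y \<in> {x \<in> UNIV. {y. x \<le> y} \<in> U}" by blast
    next
      fix D s assume H: "D \<subseteq> (UNIV::'a set)" "directed_in (\<le>) D" "is_sup_in UNIV (\<le>) D s"
          "s \<in> {x \<in> UNIV. {y. x \<le> y} \<in> U}"
      define D' where "D' = (\<lambda>x. {y. x \<le> y}) ` D"
      have D'K: "D' \<subseteq> K_Sigma" unfolding D'_def using inK by blast
      have D'd: "directed_in (\<lambda>A B. B \<subseteq> A) D'"
        unfolding directed_in_def
      proof (intro conjI ballI)
        show "D' \<noteq> {}" using H unfolding D'_def directed_in_def by blast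
        fix A B assume "A \<in> D'" "B \<in> D'"
        then obtain a b where ab: "a \<in> D" "b \<in> D" "A = {y. a \<le> y}" "B = {y. b \<le> y}"
          unfolding D'_def by blast
        then obtain c where c: "c \<in> D" "a \<le> c" "b \<le> c" using dir_ub[OF H(2)] by blast
        have "{y. c \<le> y} \<in> D'" using c unfolding D'_def by blast
        moreover have "{y. c \<le> y} \<subseteq> A" "{y. c \<le> y} \<subseteq> B" using ab c by auto
        ultimately show "\<exists>z\<in>D'. z \<subseteq> A \<and> z \<subseteq> B" by blast
      qed
      have D's: "is_sup_in K_Sigma (\<lambda>A B. B \<subseteq> A) D' {y. s \<le> y}"
        unfolding is_sup_in_def
      proof (intro conjI ballI impI)
        show "{y. s \<le> y} \<in> K_Sigma" by (rule inK)
        fix A assume "A \<in> D'"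
        then obtain a where a: "a \<in> D" "A = {y. a \<le> y}" unfolding D'_def by blast
        then have "a \<le> s" using H(3) unfolding is_sup_in_def by blast
        then show "{y. s \<le> y} \<subseteq> A" using a by auto
      next
        fix u assume "u \<in> K_Sigma" and ub: "\<forall>d\<in>D'. u \<subseteq> d"
        show "u \<subseteq> {y. s \<le> y}"
        proof
          fix y assume "y \<in> u"
          then have "\<forall>d\<in>D. d \<le> y" using ub unfolding D'_def by blast
          then show "y \<in> {y. s \<le> y}" using H(3) unfolding is_sup_in_def by blast
        qed
      qed
      have "{y. s \<le> y} \<in> U" using H(4) by blast
      then obtain A where "A \<in> D'" "A \<in> U" using so_dir[OF U D'K D'd D's] by blast
      then show "\<exists>d\<in>D. d \<in> {x \<in> UNIV. {y. x \<le> y} \<in> U}" unfolding D'_def by blast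
    qed
  qed
qed

end
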